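(* If a set of tasks $\mathcal{S}\subseteq\mathcal{T}$ admits a feasible schedule on $C$ machines, then $\mu_m^C(\mathcal{S})\le C\cdot\tau_m$ for all $m\in\{0,1,\dots,L\}$.
   Context: Model: $C$ identical machines; finite task set $\mathcal{T}$. Task $T_i$ has workload $D_i\in\mathbb{Z}^+$, deadline $d_i\in\mathbb{Z}^+$, parallelism bound $k_i\in\mathbb{Z}^+$. Slots are $1,\dots,d$ with $d=\max_i d_i$. A feasible schedule of $\mathcal{S}$ on $C$ machines is a family of functions $y_i:\{1,\dots,d_i\}\to\{0,\dots,k_i\}$ ($T_i\in\mathcal{S}$) with $\sum_{t\le d_i}y_i(t)\ge D_i$ for all $T_i\in\mathcal{S}$ and $\sum_{T_i\in\mathcal{S}}y_i(t)\le C$ for every slot $t$. Let $len_j=\lceil D_j/k_j\rceil$; let $0=\tau_0<\tau_1<\dots<\tau_L=d$ where $\{\tau_1,\dots,\tau_L\}$ is the set of distinct deadlines of tasks in $\mathcal{T}$. For $m\in\{0,\dots,L\}$, $\lambda_m(\mathcal{S})=\sum_{T_j\in\mathcal{S},\,d_j>\tau_{L-m}} c_j^{(m)}$ with $c_j^{(m)}=D_j$ if $len_j\le d_j-\tau_{L-m}$ and $c_j^{(m)}=k_j(d_j-\tau_{L-m})$ otherwise. $\lambda_0^C(\mathcal{S})=0$ and $\lambda_m^C(\mathcal{S})=\lambda_{m-1}^C(\mathcal{S})+\min\{\lambda_m(\mathcal{S})-\lambda_{m-1}^C(\mathcal{S}),\ C(\tau_{L-m+1}-\tau_{L-m})\}$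 for $m\ge1$. Finally $\mu_m^C(\mathcal{S})=\sum_{T_j\in\mathcal{S}}D_j-\lambda_{L-m}^C(\mathcal{S})$. The condition in the claim is called the boundary condition. *)

theory Defs
  imports Complex_Main
begin

text \<open>Tasks are elements of a type 'a; the finite task set is T.
  D i = workload, dl i = deadline, k i = parallelism bound.\<close>

definition feasible_schedule ::
  "nat \<Rightarrow> 'a set \<Rightarrow> ('a \<Rightarrow> nat) \<Rightarrow> ('a \<Rightarrow> nat) \<Rightarrow> ('a \<Rightarrow> nat) \<Rightarrow> ('a \<Rightarrow> nat \<Rightarrow> nat) \<Rightarrow> bool" where
  "feasible_schedule C S D dl k y \<longleftrightarrow>
     (\<forall>i\<in>S. \<forall>t\<in>{1..dl i}. y i t \<le> k i) \<and>
     (\<forall>i\<in>S. (\<Sum>t\<in>{1..dl i}. y i t) \<ge> D i) \<and>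
     (\<forall>t\<in>{1..Max (dl ` S)}. (\<Sum>i\<in>{i\<in>S. t \<le> dl i}. y i t) \<le> C)"

definition admits_feasible_schedule ::
  "nat \<Rightarrow> 'a set \<Rightarrow> ('a \<Rightarrow> nat) \<Rightarrow> ('a \<Rightarrow> nat) \<Rightarrow> ('a \<Rightarrow> nat) \<Rightarrow> bool" where
  "admits_feasible_schedule C S D dl k \<longleftrightarrow> (\<exists>y. feasible_schedule C S D dl k y)"

definition numL :: "'a set \<Rightarrow> ('a \<Rightarrow> nat) \<Rightarrow> nat" where
  "numL T dl = card (dl ` T)"

text \<open>tau 0 = 0 and tau 1 < ... < tau L are the distinct deadlines.\<close>
definition tau :: "'a set \<Rightarrow> ('a \<Rightarrow> nat) \<Rightarrow> nat \<Rightarrow> nat" where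
  "tau T dl m = (if m = 0 then 0 else sorted_list_of_set (dl ` T) ! (m - 1))"

definition len :: "('a \<Rightarrow> nat) \<Rightarrow> ('a \<Rightarrow> nat) \<Rightarrow> 'a \<Rightarrow> nat" where
  "len D k j = nat \<lceil>real (D j) / real (k j)\<rceil>"

definition cjm :: "'a set \<Rightarrow> ('a \<Rightarrow> nat) \<Rightarrow> ('a \<Rightarrow> nat) \<Rightarrow> ('a \<Rightarrow> nat) \<Rightarrow> nat \<Rightarrow> 'a \<Rightarrow> nat" where
  "cjm T D dl k m j =
     (let th = tau T dl (numL T dl - m) in
      if len D k j \<le> dl j - th then D j else k j * (dl j - th))"

definition lam :: "'a set \<Rightarrow> 'a set \<Rightarrow> ('a \<Rightarrow> nat) \<Rightarrow> ('a \<Rightarrow> nat) \<Rightarrow> ('a \<Rightarrow> nat) \<Rightarrow> nat \<Rightarrow> int" where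
  "lam T S D dl k m =
     (\<Sum>j\<in>{j\<in>S. dl j > tau T dl (numL T dl - m)}. int (cjm T D dl k m j))"

fun lamC :: "nat \<Rightarrow> 'a set \<Rightarrow> 'a set \<Rightarrow> ('a \<Rightarrow> nat) \<Rightarrow> ('a \<Rightarrow> nat) \<Rightarrow> ('a \<Rightarrow> nat) \<Rightarrow> nat \<Rightarrow> int" where
  "lamC C T S D dl k 0 = 0"
| "lamC C T S D dl k (Suc m) =
     lamC C T S D dl k m +
     min (lam T S D dl k (Suc m) - lamC C T S D dl k m)
         (int C * (int (tau T dl (numL T dl - Suc m + 1)) - int (tau T dl (numL T dl - Suc m))))"

definition muC :: "nat \<Rightarrow> 'a set \<Rightarrow> 'a set \<Rightarrow> ('a \<Rightarrow> nat) \<Rightarrow> ('a \<Rightarrow> nat) \<Rightarrow> ('a \<Rightarrow> nat) \<Rightarrow> nat \<Rightarrow> int" where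
  "muC C T S D dl k m = (\<Sum>j\<in>S. int (D j)) - lamC C T S D dl k (numL T dl - m)"

end

theory Submission
  imports Defs
begin

definition BB :: "('a \<Rightarrow> nat) \<Rightarrow> ('a \<Rightarrow> nat \<Rightarrow> nat) \<Rightarrow> 'a \<Rightarrow> nat \<Rightarrow> nat" where
  "BB dl y j \<tau> = (\<Sum>t\<in>{0<..\<tau>}. if t \<le> dl j then y j t else 0)"

definition AA :: "('a \<Rightarrow> nat) \<Rightarrow> ('a \<Rightarrow> nat) \<Rightarrow> ('a \<Rightarrow> nat \<Rightarrow> nat) \<Rightarrow> 'a \<Rightarrow> nat \<Rightarrow> int" where
  "AA D dl y j \<tau> = int (D j) - min (int (D j)) (int (BB dl y j \<tau>))"

lemma BB_split:
  assumes "a \<le> b"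
  shows "BB dl y j b = BB dl y j a + (\<Sum>t\<in>{a<..b}. if t \<le> dl j then y j t else 0)"
proof -
  have "{0<..b} = {0<..a} \<union> {a<..b}" using assms by auto
  moreover have "{0<..a} \<inter> {a<..b} = {}" by auto
  ultimately show ?thesis unfolding BB_def by (simp add: sum.union_disjoint)
qed

lemma BB_full:
  assumes "dl j \<le> \<tau>"
  shows "BB dl y j \<tau> = (\<Sum>t\<in>{1..dl j}. y j t)"
proof -
  have "BB dl y j \<tau> = (\<Sum>t\<in>{t\<in>{0<..\<tau>}. t \<le> dl j}. y j t)"
    unfolding BB_def by (rule sum.inter_filter[symmetric]) simp
  moreover have "{t\<in>{0<..\<tau>}. t \<le> dl j} = {1..dl j}" using assms by auto
  ultimately show ?thesis by simp
qed

lemma cap_bound: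
  assumes fs: "feasible_schedule C S D dl k y" and fin: "finite S"
  shows "(\<Sum>j\<in>S. \<Sum>t\<in>{a<..b}. if t \<le> dl j then y j t else 0) \<le> C * (b - a)"
proof -
  have "(\<Sum>j\<in>S. \<Sum>t\<in>{a<..b}. if t \<le> dl j then y j t else 0)
      = (\<Sum>t\<in>{a<..b}. \<Sum>j\<in>S. if t \<le> dl j then y j t else 0)"
    by (rule sum.swap)
  also have "\<dots> \<le> (\<Sum>t\<in>{a<..b}. C)"
  proof (rule sum_mono)
    fix t assume t: "t \<in> {a<..b}"
    have eq: "(\<Sum>j\<in>S. if t \<le> dl j then y j t else 0) = (\<Sum>i\<in>{i\<in>S. t \<le> dl i}. y i t)"
      using fin by (simp add: sum.inter_filter)
    show "(\<Sum>j\<in>S. if t \<le> dl j then y j t else 0) \<le> C"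
    proof (cases "{i\<in>S. t \<le> dl i} = {}")
      case True thus ?thesis using eq by simp
    next
      case False
      then obtain i where i: "i \<in> S" "t \<le> dl i" by auto
      have "dl i \<le> Max (dl ` S)" using fin i by simp
      hence "t \<in> {1..Max (dl ` S)}" using t i by auto
      thus ?thesis using fs eq unfolding feasible_schedule_def by simp
    qed
  qed
  also have "\<dots> = C * (b - a)" by simp
  finally show ?thesis .
qed

lemma AA_zero:
  assumes fs: "feasible_schedule C S D dl k y" and j: "j \<in> S" and "dl j \<le> \<tau>"
  shows "AA D dl y j \<tau> = 0"
proof -
  have "BB dl y j \<tau> \<ge> D j" using BB_full[of dl j \<tau> y, OF assms(3)] fs j unfolding feasible_schedule_def by auto
  thus ?thesis unfolding AA_def by simp
qed

lemma AA_step: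
  assumes "a \<le> b"
  shows "AA D dl y j a \<le> AA D dl y j b + int (\<Sum>t\<in>{a<..b}. if t \<le> dl j then y j t else 0)"
proof -
  define s where "s = (\<Sum>t\<in>{a<..b}. if t \<le> dl j then y j t else 0)"
  have "BB dl y j b = BB dl y j a + s" unfolding s_def by (rule BB_split[OF assms])
  thus ?thesis unfolding AA_def s_def[symmetric] by (auto simp: min_def)
qed

lemma AA_cjm:
  assumes fs: "feasible_schedule C S D dl k y" and j: "j \<in> S" and gt: "dl j > \<tau>"
  shows "AA D dl y j \<tau> \<le> int (if len D k j \<le> dl j - \<tau> then D j else k j * (dl j - \<tau>))"
proof -
  have s: "BB dl y j (dl j) = BB dl y j \<tau> + (\<Sum>t\<in>{\<tau><..dl j}. if t \<le> dl j then y j t else 0)"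
    by (rule BB_split) (use gt in simp)
  have full: "BB dl y j (dl j) \<ge> D j" using BB_full[of dl j "dl j"] fs j unfolding feasible_schedule_def by auto
  have "(\<Sum>t\<in>{\<tau><..dl j}. if t \<le> dl j then y j t else 0) \<le> (\<Sum>t\<in>{\<tau><..dl j}. k j)"
    apply (rule sum_mono) using fs j unfolding feasible_schedule_def by auto
  hence aft: "(\<Sum>t\<in>{\<tau><..dl j}. if t \<le> dl j then y j t else 0) \<le> k j * (dl j - \<tau>)" by (simp add: mult.commute)
  have "AA D dl y j \<tau> \<le> int (D j)" unfolding AA_def by simp
  moreover have "AA D dl y j \<tau> \<le> int (k j * (dl j - \<tau>))"
    using s full aft unfolding AA_def by linarith
  ultimately show ?thesis by simp
qed

lemma tau_mono:
  assumes "finite T" "i \<le> j" "j \<le> numL T dl"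
  shows "tau T dl i \<le> tau T dl j"
proof (cases "i = 0")
  case True thus ?thesis by (simp add: tau_def)
next
  case False
  have len: "length (sorted_list_of_set (dl ` T)) = numL T dl" using assms by (simp add: numL_def)
  show ?thesis using False assms unfolding tau_def
    by (auto intro!: sorted_nth_mono simp: len numL_def)
qed

lemma tau_last:
  assumes "finite T" "j \<in> T"
  shows "dl j \<le> tau T dl (numL T dl)"
proof -
  let ?xs = "sorted_list_of_set (dl ` T)"
  have len: "length ?xs = numL T dl" using assms by (simp add: numL_def)
  have "dl j \<in> set ?xs" using assms by simp
  then obtain i where i: "i < length ?xs" "?xs ! i = dl j" by (auto simp: in_set_conv_nth)
  have "?xs ! i \<le> ?xs ! (numL T dl - 1)" using i len by (intro sorted_nth_mono) auto
  moreover have "numL T dl \<noteq> 0" using i len by simp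
  ultimately show ?thesis using i unfolding tau_def by simp
qed

theorem lemma2:
  fixes C :: nat and T S :: "'a set" and D dl k :: "'a \<Rightarrow> nat"
  assumes "finite T"
    and "\<forall>i\<in>T. D i > 0 \<and> dl i > 0 \<and> k i > 0"
    and "S \<subseteq> T"
    and "admits_feasible_schedule C S D dl k"
  shows "\<forall>m\<in>{0..numL T dl}. muC C T S D dl k m \<le> int C * int (tau T dl m)"
proof
  fix m assume m: "m \<in> {0..numL T dl}"
  let ?L = "numL T dl"
  obtain y where fs: "feasible_schedule C S D dl k y" using assms(4) unfolding admits_feasible_schedule_def by auto
  have finS: "finite S" using assms(1,3) finite_subset by blast
  let ?A = "\<lambda>\<tau>. (\<Sum>j\<in>S. AA D dl y j \<tau>)"
  have lamb: "?A (tau T dl (?L - n)) \<le> lam T S D dl k n" for n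
  proof -
    let ?t = "tau T dl (?L - n)"
    have "?A ?t = (\<Sum>j\<in>{j\<in>S. dl j > ?t}. AA D dl y j ?t)"
    proof -
      have "?A ?t = (\<Sum>j\<in>S. if dl j > ?t then AA D dl y j ?t else 0)"
        using AA_zero[OF fs] by (intro sum.cong) auto
      thus ?thesis using finS by (simp add: sum.inter_filter)
    qed
    also have "\<dots> \<le> lam T S D dl k n" unfolding lam_def
      by (rule sum_mono) (use AA_cjm[OF fs] in \<open>auto simp: cjm_def Let_def\<close>)
    finally show ?thesis .
  qed
  have main: "n \<le> ?L \<Longrightarrow> ?A (tau T dl (?L - n)) \<le> lamC C T S D dl k n" for n
  proof (induction n)
    case 0
    have "?A (tau T dl ?L) = 0"
      using AA_zero[OF fs] tau_last[OF assms(1)] assms(3) by (intro sum.neutral) blast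
    thus ?case by simp
  next
    case (Suc n)
    let ?a = "tau T dl (?L - Suc n)" and ?b = "tau T dl (?L - n)"
    have eqb: "?L - Suc n + 1 = ?L - n" using Suc.prems by simp
    have ab: "?a \<le> ?b" using Suc.prems tau_mono[OF assms(1)] by simp
    have IH: "?A ?b \<le> lamC C T S D dl k n" using Suc by simp
    have "?A ?a \<le> (\<Sum>j\<in>S. AA D dl y j ?b + int (\<Sum>t\<in>{?a<..?b}. if t \<le> dl j then y j t else 0))"
      by (rule sum_mono) (rule AA_step[OF ab])
    also have "\<dots> = ?A ?b + int (\<Sum>j\<in>S. \<Sum>t\<in>{?a<..?b}. if t \<le> dl j then y j t else 0)"
      by (simp add: sum.distrib)
    also have "\<dots> \<le> ?A ?b + int (C * (?b - ?a))"
      using cap_bound[OF fs finS, of ?a ?b] by linarith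
    finally have h1: "?A ?a \<le> lamC C T S D dl k n + int C * (int ?b - int ?a)"
      using IH ab by (simp add: of_nat_diff)
    have h2: "?A ?a \<le> lam T S D dl k (Suc n)" using lamb[of "Suc n"] by simp
    show ?case using h1 h2 eqb by (simp add: min_def)
  qed
  have mm: "?L - (?L - m) = m" using m by simp
  have h: "?A (tau T dl m) \<le> lamC C T S D dl k (?L - m)" using main[of "?L - m"] mm by simp
  have "(\<Sum>j\<in>S. int (D j)) - ?A (tau T dl m) = (\<Sum>j\<in>S. min (int (D j)) (int (BB dl y j (tau T dl m))))"
    unfolding AA_def by (simp add: sum_subtractf)
  also have "\<dots> \<le> (\<Sum>j\<in>S. int (BB dl y j (tau T dl m)))" by (rule sum_mono) simp
  also have "\<dots> = int (\<Sum>j\<in>S. \<Sum>t\<in>{0<..tau T dl m}. if t \<le> dl j then y j t else 0)"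
    unfolding BB_def by simp
  also have "\<dots> \<le> int (C * tau T dl m)" using cap_bound[OF fs finS, of 0 "tau T dl m"] by (simp only: of_nat_le_iff minus_nat.diff_0)
  finally show "muC C T S D dl k m \<le> int C * int (tau T dl m)"
    using h unfolding muC_def by simp
qed

end
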